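(* Let $n\ge 3$. The set $\mathbf{W}^{\ge 6}_{\mathrm{bf}}(n)$ is the unique maximal transition semigroup of a minimal DFA $\mathcal{D}_n$ of a bifix-free language (with the state conventions below) in which there are no colliding pairs of states.
   Context: A language is bifix-free if no word of it is a proper prefix or a proper suffix of another word of it. For a minimal complete DFA $\mathcal{D}_n$ of a bifix-free language with $n$ states the states are named $Q=\{0,\dots,n-1\}$ so that $0$ is initial, $n-1$ is the empty state and $n-2$ is the unique final state (quotient $\{\varepsilon\}$). Transformations act on the right, $q(st)=(qs)t$; the transition semigroup $T(n)$ is the semigroup of transformations of $Q$ induced by nonempty words. Let $Q_M=\{1,\dots,n-3\}$. An unordered pair $\{p,q\}$ of distinct states of $Q_M$ is colliding (in $T(n)$) if there is $t\in T(n)$ with $0t=p$ and $rt=q$ for some $r\in Q_M$. Let $\mathbf{B}_{\mathrm{bf}}(n)$ be the set of all transformations $t$ of $Q$ with $0\notin Qt$, $(n-1)t=n-1$, $(n-2)t=n-1$, and for all $j\ge1$, either $0t^j=n-1$ or $0t^j\ne qt^j$ for all $0<q<n-1$. Then $\mathbf{W}^{\ge 6}_{\mathrm{bf}}(n)=\{t\in\mathbf{B}_{\mathrm{bf}}(n)\mid 0t\in\{n-2,n-1\}$, or $0t\in Q_M$ and $qt\in\{n-2,n-1\}$ for all $q\in Q_M\}$. *)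

theory Defs
  imports "HOL-Library.Sublist"
begin

text \<open>States are the naturals 0..n-1. A DFA over a finite alphabet Alph (letters are naturals)
  is given by a letter-transition function delta; initial state 0, final set {n-2}.
  Letters act on the right; a word a1...ak sends q to delta ak (... (delta a1 q)).\<close>

definition run :: "(nat \<Rightarrow> nat \<Rightarrow> nat) \<Rightarrow> nat list \<Rightarrow> nat \<Rightarrow> nat" where
  "run delta w q = fold delta w q"

definition transf :: "nat \<Rightarrow> (nat \<Rightarrow> nat) set" where
  "transf n = {t. (\<forall>q<n. t q < n) \<and> (\<forall>q\<ge>n. t q = q)}"

definition word_transf :: "nat \<Rightarrow> (nat \<Rightarrow> nat \<Rightarrow> nat) \<Rightarrow> nat list \<Rightarrow> (nat \<Rightarrow> nat)" where
  "word_transf n delta w = (\<lambda>q. if q < n then run delta w q else q)"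

definition trans_sg :: "nat \<Rightarrow> nat set \<Rightarrow> (nat \<Rightarrow> nat \<Rightarrow> nat) \<Rightarrow> (nat \<Rightarrow> nat) set" where
  "trans_sg n Alph delta = {word_transf n delta w | w. w \<in> lists Alph \<and> w \<noteq> []}"

definition lang :: "nat \<Rightarrow> nat set \<Rightarrow> (nat \<Rightarrow> nat \<Rightarrow> nat) \<Rightarrow> nat \<Rightarrow> nat list set" where
  "lang n Alph delta q = {w \<in> lists Alph. run delta w q = n - 2}"

definition bifix_free :: "'a list set \<Rightarrow> bool" where
  "bifix_free L \<longleftrightarrow> (\<forall>u\<in>L. \<forall>v\<in>L. u \<noteq> v \<longrightarrow> \<not> prefix u v \<and> \<not> suffix u v)"

definition is_dfa :: "nat \<Rightarrow> nat set \<Rightarrow> (nat \<Rightarrow> nat \<Rightarrow> nat) \<Rightarrow> bool" where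
  "is_dfa n Alph delta \<longleftrightarrow> finite Alph \<and> (\<forall>a\<in>Alph. \<forall>q<n. delta a q < n)"

definition minimal_dfa :: "nat \<Rightarrow> nat set \<Rightarrow> (nat \<Rightarrow> nat \<Rightarrow> nat) \<Rightarrow> bool" where
  "minimal_dfa n Alph delta \<longleftrightarrow>
     (\<forall>q<n. \<exists>w\<in>lists Alph. run delta w 0 = q) \<and>
     (\<forall>p<n. \<forall>q<n. p \<noteq> q \<longrightarrow> lang n Alph delta p \<noteq> lang n Alph delta q)"

definition bf_dfa :: "nat \<Rightarrow> nat set \<Rightarrow> (nat \<Rightarrow> nat \<Rightarrow> nat) \<Rightarrow> bool" where
  "bf_dfa n Alph delta \<longleftrightarrow>
     is_dfa n Alph delta \<and> minimal_dfa n Alph delta \<and>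
     bifix_free (lang n Alph delta 0) \<and>
     lang n Alph delta (n - 1) = {} \<and> lang n Alph delta (n - 2) = {[]}"

definition QM :: "nat \<Rightarrow> nat set" where
  "QM n = {1..n - 3}"

definition colliding :: "nat \<Rightarrow> (nat \<Rightarrow> nat) set \<Rightarrow> nat \<Rightarrow> nat \<Rightarrow> bool" where
  "colliding n T p q \<longleftrightarrow> p \<in> QM n \<and> q \<in> QM n \<and> p \<noteq> q \<and>
     (\<exists>t\<in>T. t 0 = p \<and> (\<exists>r\<in>QM n. t r = q))"

definition no_colliding :: "nat \<Rightarrow> (nat \<Rightarrow> nat) set \<Rightarrow> bool" where
  "no_colliding n T \<longleftrightarrow> (\<forall>p q. \<not> colliding n T p q)"

definition B_bf :: "nat \<Rightarrow> (nat \<Rightarrow> nat) set" where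
  "B_bf n = {t \<in> transf n. (\<forall>q<n. t q \<noteq> 0) \<and> t (n - 1) = n - 1 \<and> t (n - 2) = n - 1 \<and>
     (\<forall>j\<ge>1. (t ^^ j) 0 = n - 1 \<or> (\<forall>q. 0 < q \<and> q < n - 1 \<longrightarrow> (t ^^ j) 0 \<noteq> (t ^^ j) q))}"

definition W6_bf :: "nat \<Rightarrow> (nat \<Rightarrow> nat) set" where
  "W6_bf n = {t \<in> B_bf n. t 0 \<in> {n - 2, n - 1} \<or>
     (t 0 \<in> QM n \<and> (\<forall>q\<in>QM n. t q \<in> {n - 2, n - 1}))}"

end

theory Submission
  imports Defs
begin

lemma run_Nil[simp]: "run delta [] q = q" by (simp add: run_def)
lemma run_Cons[simp]: "run delta (a#w) q = run delta w (delta a q)" by (simp add: run_def)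
lemma run_append[simp]: "run delta (u@v) q = run delta v (run delta u q)" by (simp add: run_def)

lemma run_less: "is_dfa n Alph delta \<Longrightarrow> w \<in> lists Alph \<Longrightarrow> q < n \<Longrightarrow> run delta w q < n"
  by (induction w arbitrary: q) (auto simp: is_dfa_def)

lemma concat_rep_lists: "w \<in> lists A \<Longrightarrow> concat (replicate j w) \<in> lists A"
  by (induction j) auto

lemma bf_key:
  assumes bf: "bf_dfa n Alph delta" and n: "n \<ge> 3"
    and u: "u \<in> lists Alph" "u \<noteq> []" and z: "z \<in> lists Alph"
    and eq: "run delta z (run delta u 0) = run delta z 0"
    and ne: "run delta z 0 \<noteq> n - 1"
  shows False
proof -
  have dfa: "is_dfa n Alph delta" and min: "minimal_dfa n Alph delta"
    and bfl: "bifix_free (lang n Alph delta 0)" and e: "lang n Alph delta (n-1) = {}"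
    using bf by (auto simp: bf_dfa_def)
  let ?s = "run delta z 0"
  have sl: "?s < n" using run_less[OF dfa z] n by simp
  have n1: "n - 1 < n" using n by simp
  have "lang n Alph delta ?s \<noteq> {}"
  proof
    assume "lang n Alph delta ?s = {}"
    then have "lang n Alph delta ?s = lang n Alph delta (n-1)" using e by simp
    then show False using min sl n1 ne unfolding minimal_dfa_def by blast
  qed
  then obtain v where v: "v \<in> lists Alph" "run delta v ?s = n - 2"
    by (auto simp: lang_def)
  have x1: "z @ v \<in> lang n Alph delta 0" using v z by (simp add: lang_def)
  have x2: "u @ z @ v \<in> lang n Alph delta 0" using v z u eq by (simp add: lang_def)
  have ne2: "z @ v \<noteq> u @ z @ v" using u(2) by simp
  have "suffix (z @ v) (u @ z @ v)" by (simp add: suffix_def)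
  then show False using bfl x1 x2 ne2 unfolding bifix_free_def by blast
qed

lemma funpow_word:
  assumes dfa: "is_dfa n Alph delta" and w: "w \<in> lists Alph"
  shows "q < n \<Longrightarrow> (word_transf n delta w ^^ j) q = run delta (concat (replicate j w)) q"
proof (induction j arbitrary: q)
  case 0 then show ?case by simp
next
  case (Suc j)
  have "(word_transf n delta w ^^ Suc j) q = (word_transf n delta w ^^ j) (word_transf n delta w q)"
    by (simp only: funpow_Suc_right comp_def)
  also have "word_transf n delta w q = run delta w q" using Suc.prems by (simp add: word_transf_def)
  also have "(word_transf n delta w ^^ j) (run delta w q) = run delta (concat (replicate j w)) (run delta w q)"
    using Suc.IH run_less[OF dfa w Suc.prems] by blast
  finally show ?case by simp
qed

lemma part2:
  assumes bf: "bf_dfa n Alph delta" and n: "n \<ge> 3" and nc: "no_colliding n (trans_sg n Alph delta)"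
    and t: "t \<in> trans_sg n Alph delta"
  shows "t \<in> W6_bf n"
proof -
  obtain w where w: "w \<in> lists Alph" "w \<noteq> []" and tw: "t = word_transf n delta w"
    using t by (auto simp: trans_sg_def)
  have dfa: "is_dfa n Alph delta" and min: "minimal_dfa n Alph delta"
    and e: "lang n Alph delta (n-1) = {}" and f: "lang n Alph delta (n-2) = {[]}"
    using bf by (auto simp: bf_dfa_def)
  have reach: "\<And>q. q < n \<Longrightarrow> \<exists>u\<in>lists Alph. run delta u 0 = q" using min by (simp add: minimal_dfa_def)
  have tq: "\<And>q. q < n \<Longrightarrow> t q = run delta w q" by (simp add: tw word_transf_def)
  have tlt: "\<And>q. q < n \<Longrightarrow> t q < n" using tq run_less[OF dfa w(1)] by simp
  have n1: "n - 1 < n" using n by simp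
  have nonempty: "\<exists>v. v \<in> lists Alph \<and> run delta v s = n - 2" if "s < n" "s \<noteq> n - 1" for s
  proof -
    have "lang n Alph delta s \<noteq> {}"
    proof
      assume "lang n Alph delta s = {}"
      then have "lang n Alph delta s = lang n Alph delta (n-1)" using e by simp
      then show False using min that n1 unfolding minimal_dfa_def by blast
    qed
    then show ?thesis by (auto simp: lang_def)
  qed
  have t0: "t q \<noteq> 0" if q: "q < n" for q
  proof
    assume tq0: "t q = 0"
    obtain u where u: "u \<in> lists Alph" "run delta u 0 = q" using reach q by blast
    show False
      apply (rule bf_key[OF bf n, of "u @ w" "[]"]) using u w tq0 tq q n by auto
  qed
  have ta: "t (n-1) = n-1"
  proof (rule ccontr)
    assume a: "t (n-1) \<noteq> n-1"
    obtain v where v: "v \<in> lists Alph" "run delta v (t (n-1)) = n - 2"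
      using nonempty[OF tlt[OF n1] a] by blast
    have "w @ v \<in> lang n Alph delta (n-1)" using v w tq[OF n1] by (simp add: lang_def)
    then show False using e by simp
  qed
  have n2: "n - 2 < n" using n by simp
  have tb: "t (n-2) = n-1"
  proof (rule ccontr)
    assume a: "t (n-2) \<noteq> n-1"
    obtain v where v: "v \<in> lists Alph" "run delta v (t (n-2)) = n - 2"
      using nonempty[OF tlt[OF n2] a] by blast
    have "w @ v \<in> lang n Alph delta (n-2)" using v w tq[OF n2] by (simp add: lang_def)
    then show False using f w by simp
  qed
  have pw: "(t ^^ j) 0 = n - 1 \<or> (\<forall>q. 0 < q \<and> q < n - 1 \<longrightarrow> (t ^^ j) 0 \<noteq> (t ^^ j) q)"
    if j: "j \<ge> 1" for j
  proof (cases "(t ^^ j) 0 = n - 1")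
    case True then show ?thesis by simp
  next
    case False
    note ne = False
    show ?thesis
    proof (intro disjI2 allI impI notI)
      fix q assume q: "0 < q \<and> q < n - 1" and eq: "(t ^^ j) 0 = (t ^^ j) q"
      obtain u where u: "u \<in> lists Alph" "run delta u 0 = q" using reach[of q] q by (meson less_imp_diff_less diff_le_self order_less_le_trans)
      have un: "u \<noteq> []" using u q by auto
      let ?W = "concat (replicate j w)"
      have W: "?W \<in> lists Alph" using concat_rep_lists[OF w(1)] .
      have e1: "(t ^^ j) q = run delta ?W q" using funpow_word[OF dfa w(1), of q j] q tw by (metis diff_le_self order_less_le_trans)
      have e0: "(t ^^ j) 0 = run delta ?W 0" using funpow_word[OF dfa w(1)] n tw by simp
      show False
        apply (rule bf_key[OF bf n u(1) un W]) using e1 e0 eq ne u by auto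
    qed
  qed
  have tr: "t \<in> transf n" using tlt by (auto simp: transf_def tw word_transf_def)
  have B: "t \<in> B_bf n" using tr t0 ta tb pw by (auto simp: B_bf_def)
  have inj1: "t 0 = n - 1 \<or> (\<forall>q. 0 < q \<and> q < n - 1 \<longrightarrow> t 0 \<noteq> t q)"
    using pw[of 1] by simp
  have sh: "t 0 \<in> {n-2, n-1} \<or> (t 0 \<in> QM n \<and> (\<forall>q\<in>QM n. t q \<in> {n-2,n-1}))"
  proof (cases "t 0 \<in> {n-2, n-1}")
    case True then show ?thesis by simp
  next
    case False
    note nd = False
    have p: "t 0 \<in> QM n" using nd tlt[of 0] t0[of 0] n by (auto simp: QM_def)
    have "t q \<in> {n-2,n-1}" if q: "q \<in> QM n" for q
    proof (rule ccontr)
      assume c: "t q \<notin> {n-2,n-1}"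
      have ql: "q < n" "0 < q" "q < n - 1" using q n by (auto simp: QM_def)
      have tqQ: "t q \<in> QM n" using c tlt[OF ql(1)] t0[OF ql(1)] n by (auto simp: QM_def)
      have "t 0 \<noteq> t q" using inj1 nd ql by auto
      then have "colliding n (trans_sg n Alph delta) (t 0) (t q)"
        unfolding colliding_def using p tqQ t q by blast
      then show False using nc by (simp add: no_colliding_def)
    qed
    then show ?thesis using p by blast
  qed
  show ?thesis using B sh by (simp add: W6_bf_def)
qed


lemma W6D:
  assumes t: "t \<in> W6_bf n"
  shows "t \<in> transf n" "\<And>q. q < n \<Longrightarrow> t q \<noteq> 0" "t (n-1) = n-1" "t (n-2) = n-1"
    "t 0 \<in> {n-2, n-1} \<or> (t 0 \<in> QM n \<and> (\<forall>q\<in>QM n. t q \<in> {n-2,n-1}))"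
    "t 0 = n - 1 \<or> (\<forall>q. 0 < q \<and> q < n - 1 \<longrightarrow> t 0 \<noteq> t q)"
proof -
  have B: "t \<in> B_bf n" and sh: "t 0 \<in> {n-2, n-1} \<or> (t 0 \<in> QM n \<and> (\<forall>q\<in>QM n. t q \<in> {n-2,n-1}))"
    using t by (auto simp: W6_bf_def)
  show "t \<in> transf n" "\<And>q. q < n \<Longrightarrow> t q \<noteq> 0" "t (n-1) = n-1" "t (n-2) = n-1"
    using B by (auto simp: B_bf_def)
  show "t 0 \<in> {n-2, n-1} \<or> (t 0 \<in> QM n \<and> (\<forall>q\<in>QM n. t q \<in> {n-2,n-1}))" by (fact sh)
  have "\<forall>j\<ge>1. (t ^^ j) 0 = n - 1 \<or> (\<forall>q. 0 < q \<and> q < n - 1 \<longrightarrow> (t ^^ j) 0 \<noteq> (t ^^ j) q)"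
    using B by (simp add: B_bf_def)
  then show "t 0 = n - 1 \<or> (\<forall>q. 0 < q \<and> q < n - 1 \<longrightarrow> t 0 \<noteq> t q)"
    by (metis order_refl funpow.simps(2) funpow_0 comp_apply One_nat_def)
qed

lemma W6I:
  assumes n: "n \<ge> 3" and tr: "t \<in> transf n" and nz: "\<And>q. q < n \<Longrightarrow> t q \<noteq> 0"
   and a: "t (n-1) = n-1" and b: "t (n-2) = n-1"
   and sh: "t 0 \<in> {n-2, n-1} \<or> (t 0 \<in> QM n \<and> (\<forall>q\<in>QM n. t q \<in> {n-2,n-1}))"
   and inj: "t 0 = n - 1 \<or> (\<forall>q. 0 < q \<and> q < n - 1 \<longrightarrow> t 0 \<noteq> t q)"
  shows "t \<in> W6_bf n"
proof -
  have fix1: "(t ^^ k) (n-1) = n-1" for k using a by (induction k) auto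
  have fix2: "(t ^^ Suc k) x = n-1" if "x \<in> {n-2,n-1}" for x k
  proof -
    have "(t ^^ Suc k) x = (t ^^ k) (t x)" by (simp only: funpow_Suc_right comp_def)
    then show ?thesis using that a b fix1 by auto
  qed
  have pw: "(t ^^ j) 0 = n - 1 \<or> (\<forall>q. 0 < q \<and> q < n - 1 \<longrightarrow> (t ^^ j) 0 \<noteq> (t ^^ j) q)"
    if j: "j \<ge> 1" for j
  proof (cases "j = 1")
    case True then show ?thesis using inj by simp
  next
    case False
    then obtain k where k: "j = Suc (Suc k)" using j by (metis One_nat_def Suc_le_D not0_implies_Suc le_zero_eq)
    show ?thesis
    proof (cases "t 0 \<in> {n-2, n-1}")
      case True
      have "(t ^^ j) 0 = (t ^^ Suc k) (t 0)" unfolding k by (simp only: funpow_Suc_right comp_def)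
      then show ?thesis using fix2[OF True] by simp
    next
      case False
      then have sh2: "\<forall>q\<in>QM n. t q \<in> {n-2,n-1}" using sh by blast
      have "(t ^^ j) q = n - 1" if q: "0 < q" "q < n - 1" for q
      proof -
        have "t q \<in> {n-2,n-1}"
        proof (cases "q = n - 2")
          case True then show ?thesis using b by simp
        next
          case False
          then have "q \<in> QM n" using q n by (auto simp: QM_def)
          then show ?thesis using sh2 by blast
        qed
        moreover have "(t ^^ j) q = (t ^^ Suc k) (t q)" unfolding k by (simp only: funpow_Suc_right comp_def)
        ultimately show ?thesis using fix2 by simp
      qed
      then show ?thesis by auto
    qed
  qed
  have "t \<in> B_bf n" using tr nz a b pw by (auto simp: B_bf_def)
  then show ?thesis using sh by (simp add: W6_bf_def)
qed

lemma W6_comp: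
  assumes n: "n \<ge> 3" and f: "f \<in> W6_bf n" and g: "g \<in> W6_bf n"
  shows "g \<circ> f \<in> W6_bf n"
proof -
  note F = W6D[OF f] and G = W6D[OF g]
  have flt: "\<And>q. q < n \<Longrightarrow> f q < n" and fid: "\<And>q. q \<ge> n \<Longrightarrow> f q = q"
    using F(1) by (auto simp: transf_def)
  have glt: "\<And>q. q < n \<Longrightarrow> g q < n" and gid: "\<And>q. q \<ge> n \<Longrightarrow> g q = q"
    using G(1) by (auto simp: transf_def)
  have tr: "g \<circ> f \<in> transf n" using flt fid glt gid by (auto simp: transf_def)
  have nz: "\<And>q. q < n \<Longrightarrow> (g \<circ> f) q \<noteq> 0" using flt G(2) by simp
  have a: "(g \<circ> f) (n - 1) = n - 1" using F(3) G(3) by simp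
  have b: "(g \<circ> f) (n - 2) = n - 1" using F(4) G(3) by simp
  have both: "((g \<circ> f) 0 \<in> {n - 2, n - 1} \<or> (g \<circ> f) 0 \<in> QM n \<and> (\<forall>q\<in>QM n. (g \<circ> f) q \<in> {n - 2, n - 1}))
        \<and> ((g \<circ> f) 0 = n - 1 \<or> (\<forall>q. 0 < q \<and> q < n - 1 \<longrightarrow> (g \<circ> f) 0 \<noteq> (g \<circ> f) q))"
    proof (cases "f 0 \<in> {n-2, n-1}")
      case True
      then have "(g \<circ> f) 0 = n - 1" using G(3) G(4) by auto
      then show ?thesis by simp
    next
      case False
      then have p: "f 0 \<in> QM n" and sh: "\<forall>q\<in>QM n. f q \<in> {n-2,n-1}" using F(5) by auto
      have all: "(g \<circ> f) q = n - 1" if q: "0 < q" "q < n - 1" for q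
      proof -
        have "f q \<in> {n-2,n-1}"
        proof (cases "q = n - 2")
          case True then show ?thesis using F(4) by simp
        next
          case False
          then have "q \<in> QM n" using q n by (auto simp: QM_def)
          then show ?thesis using sh by blast
        qed
        then show ?thesis using G(3) G(4) by auto
      qed
      have pl: "f 0 < n" using p n by (auto simp: QM_def)
      have "g (f 0) < n" "g (f 0) \<noteq> 0" using glt[OF pl] G(2)[OF pl] by auto
      then have "(g \<circ> f) 0 \<in> {n - 2, n - 1} \<or> (g \<circ> f) 0 \<in> QM n" using n by (auto simp: QM_def)
      moreover have "\<forall>q\<in>QM n. (g \<circ> f) q \<in> {n - 2, n - 1}"
        using all n by (auto simp: QM_def)
      ultimately show ?thesis using all by auto
    qed
  show ?thesis using W6I[OF n tr nz a b] both by blast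
qed


lemma finite_transf: "finite (transf n)"
proof -
  let ?f = "\<lambda>t. map t [0..<n]"
  have inj: "inj_on ?f (transf n)"
  proof (rule inj_onI)
    fix s t assume s: "s \<in> transf n" and t: "t \<in> transf n" and eq: "?f s = ?f t"
    show "s = t"
    proof
      fix q show "s q = t q"
      proof (cases "q < n")
        case True then show ?thesis using eq by (metis map_eq_conv atLeastLessThan_iff set_upt zero_le)
      next
        case False then show ?thesis using s t by (simp add: transf_def)
      qed
    qed
  qed
  have "?f ` transf n \<subseteq> {xs. set xs \<subseteq> {0..<n} \<and> length xs = n}"
    by (auto simp: transf_def)
  then have "finite (?f ` transf n)"
    using finite_lists_length_eq[of "{0..<n}" n] finite_subset by blast
  then show ?thesis using finite_imageD inj by blast
qed

lemma no_coll_W6: "T \<subseteq> W6_bf n \<Longrightarrow> no_colliding n T"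
proof -
  assume T: "T \<subseteq> W6_bf n"
  have "\<not> colliding n T p q" for p q
  proof
    assume "colliding n T p q"
    then obtain t r where p: "p \<in> QM n" and q: "q \<in> QM n" and t: "t \<in> T"
      and r: "r \<in> QM n" and tr: "t r = q" and t0: "t 0 = p"
      unfolding colliding_def by blast
    have "t \<in> W6_bf n" using T t by blast
    then have "t 0 \<in> {n-2,n-1} \<or> (\<forall>q\<in>QM n. t q \<in> {n-2,n-1})" by (auto simp: W6_bf_def)
    then have "t r \<in> {n-2,n-1}" using p r t0 by (auto simp: QM_def)
    then show False using q tr by (auto simp: QM_def)
  qed
  then show ?thesis by (simp add: no_colliding_def)
qed

lemma part1:
  assumes n: "n \<ge> 3"
  shows "\<exists>Alph delta. bf_dfa n Alph delta \<and> trans_sg n Alph delta = W6_bf n \<and>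
            no_colliding n (trans_sg n Alph delta)"
proof -
  have "W6_bf n \<subseteq> transf n" using W6D(1) by blast
  then have "finite (W6_bf n)" using finite_transf finite_subset by blast
  then obtain xs where xs: "set xs = W6_bf n" using finite_list by blast
  define Alph where "Alph = {0..<length xs}"
  define delta where "delta = (\<lambda>a. xs ! a)"
  have letW: "delta a \<in> W6_bf n" if "a \<in> Alph" for a
  proof -
    have "a < length xs" using that unfolding Alph_def by simp
    then have "xs ! a \<in> set xs" by (rule nth_mem)
    then show ?thesis using xs unfolding delta_def by simp
  qed
  have letlt: "delta a q < n" if "a \<in> Alph" "q < n" for a q
    using W6D(1)[OF letW[OF that(1)]] that(2) by (auto simp: transf_def)
  have letid: "delta a q = q" if "a \<in> Alph" "q \<ge> n" for a q
    using W6D(1)[OF letW[OF that(1)]] that(2) by (auto simp: transf_def)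
  have allW: "\<exists>a\<in>Alph. delta a = t" if "t \<in> W6_bf n" for t
  proof -
    have "t \<in> set xs" using that xs by simp
    then obtain i where "i < length xs" "xs ! i = t" unfolding in_set_conv_nth by blast
    then show ?thesis unfolding Alph_def delta_def by auto
  qed
  have dfa: "is_dfa n Alph delta" using letlt by (auto simp: is_dfa_def Alph_def)
  have single: "word_transf n delta [a] = delta a" if "a \<in> Alph" for a
    using letid[OF that] by (auto simp: word_transf_def)
  have wW: "w \<in> lists Alph \<Longrightarrow> w \<noteq> [] \<Longrightarrow> word_transf n delta w \<in> W6_bf n" for w
  proof (induction w)
    case Nil then show ?case by simp
  next
    case (Cons a w)
    have a: "a \<in> Alph" using Cons.prems by simp
    show ?case
    proof (cases "w = []")
      case True then show ?thesis using single[OF a] letW[OF a] by simp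
    next
      case False
      have IH: "word_transf n delta w \<in> W6_bf n" using Cons.IH Cons.prems False by simp
      have eq: "word_transf n delta (a # w) = word_transf n delta w \<circ> delta a"
      proof (rule ext)
        fix q
        show "word_transf n delta (a # w) q = (word_transf n delta w \<circ> delta a) q"
        proof (cases "q < n")
          case True
          then show ?thesis using letlt[OF a True] by (simp add: word_transf_def)
        next
          case False
          then show ?thesis using letid[OF a, of q] by (simp add: word_transf_def)
        qed
      qed
      show ?thesis unfolding eq by (rule W6_comp[OF n letW[OF a] IH])
    qed
  qed
  have runW: "run delta w q = word_transf n delta w q" if "q < n" for w q
    using that by (simp add: word_transf_def)
  have TS: "trans_sg n Alph delta = W6_bf n"
  proof
    show "trans_sg n Alph delta \<subseteq> W6_bf n"
    proof
      fix t assume "t \<in> trans_sg n Alph delta"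
      then obtain w where "w \<in> lists Alph" "w \<noteq> []" "t = word_transf n delta w"
        unfolding trans_sg_def by blast
      then show "t \<in> W6_bf n" using wW by simp
    qed
    show "W6_bf n \<subseteq> trans_sg n Alph delta"
    proof
      fix t assume "t \<in> W6_bf n"
      then obtain a where a: "a \<in> Alph" "delta a = t" using allW by blast
      then have "t = word_transf n delta [a]" using single[OF a(1)] by simp
      moreover have "[a] \<in> lists Alph" "[a] \<noteq> []" using a by auto
      ultimately show "t \<in> trans_sg n Alph delta" unfolding trans_sg_def by auto
    qed
  qed
  have n1: "n - 1 < n" and n2: "n - 2 < n" using n by auto
  have runNE: "run delta w q \<noteq> 0" "run delta w (n-1) = n-1" "run delta w (n-2) = n-1"
    "run delta w 0 = n - 1 \<or> (\<forall>p. 0 < p \<and> p < n - 1 \<longrightarrow> run delta w 0 \<noteq> run delta w p)"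
    if "w \<in> lists Alph" "w \<noteq> []" "q < n" for w q
  proof -
    note D = W6D[OF wW[OF that(1,2)]]
    have "word_transf n delta w q \<noteq> 0" using D(2) that(3) by blast
    then show "run delta w q \<noteq> 0" using that(3) by (simp add: word_transf_def)
    show "run delta w (n-1) = n-1" using D(3) n1 by (simp add: word_transf_def)
    show "run delta w (n-2) = n-1" using D(4) n2 by (simp add: word_transf_def)
    have "0 < n" using n by simp
    have w0: "word_transf n delta w 0 = run delta w 0" using \<open>0 < n\<close> by (simp add: word_transf_def)
    have wp: "word_transf n delta w p = run delta w p" if "p < n - 1" for p
      using that by (auto simp: word_transf_def)
    show "run delta w 0 = n - 1 \<or> (\<forall>p. 0 < p \<and> p < n - 1 \<longrightarrow> run delta w 0 \<noteq> run delta w p)"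
      using D(6) w0 wp by metis
  qed
  define e where "e q = (\<lambda>x. if x < n then (if x = 0 then q else n - 1) else x)" for q
  define d where "d s = (\<lambda>x. if x < n then (if x = s then n - 2 else n - 1) else x)" for s
  have e0: "e q 0 = q" for q using n by (simp add: e_def)
  have e1: "e q x = n - 1" if "0 < x" "x < n" for q x using that by (simp add: e_def)
  have e2: "e q x = x" if "n \<le> x" for q x using that by (simp add: e_def)
  have d0: "d s s = n - 2" if "s < n" for s using that by (simp add: d_def)
  have d1: "d s x = n - 1" if "x \<noteq> s" "x < n" for s x using that by (simp add: d_def)
  have d2: "d s x = x" if "n \<le> x" for s x using that by (simp add: d_def)
  have QMl: "0 < x \<and> x < n \<and> x \<noteq> n - 2 \<and> x \<noteq> n - 1" if "x \<in> QM n" for x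
    using that n by (auto simp: QM_def)
  have eW: "e q \<in> W6_bf n" if q: "0 < q" "q < n" for q
  proof (rule W6I[OF n])
    show "e q \<in> transf n" unfolding transf_def
    proof (intro CollectI conjI allI impI)
      fix x assume x: "x < n" show "e q x < n"
      proof (cases "x = 0")
        case True then show ?thesis using q e0 by simp
      next
        case False then have "e q x = n - 1" using x by (intro e1) auto
        then show ?thesis using n by simp
      qed
    next
      fix x assume "n \<le> x" then show "e q x = x" by (rule e2)
    qed
    show "e q x \<noteq> 0" if x: "x < n" for x
    proof (cases "x = 0")
      case True then show ?thesis using q e0 by simp
    next
      case False then have "e q x = n - 1" using x by (intro e1) auto
      then show ?thesis using n by simp
    qed
    have "e q (n - 1) = n - 1" using n by (intro e1) auto
    then show "e q (n - 1) = n - 1" .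
    have "e q (n - 2) = n - 1" using n by (intro e1) auto
    then show "e q (n - 2) = n - 1" .
    show "e q 0 \<in> {n - 2, n - 1} \<or> e q 0 \<in> QM n \<and> (\<forall>x\<in>QM n. e q x \<in> {n - 2, n - 1})"
    proof (cases "q \<in> {n - 2, n - 1}")
      case True then show ?thesis using e0 by simp
    next
      case False
      then have "q \<in> QM n" using q by (auto simp: QM_def)
      moreover have "\<forall>x\<in>QM n. e q x \<in> {n - 2, n - 1}"
      proof
        fix x assume "x \<in> QM n"
        then have "0 < x" "x < n" using QMl by blast+
        then have "e q x = n - 1" by (rule e1)
        then show "e q x \<in> {n - 2, n - 1}" by simp
      qed
      ultimately show ?thesis using e0 by simp
    qed
    show "e q 0 = n - 1 \<or> (\<forall>x. 0 < x \<and> x < n - 1 \<longrightarrow> e q 0 \<noteq> e q x)"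
    proof (cases "q = n - 1")
      case True then show ?thesis using e0 by simp
    next
      case False
      have "\<forall>x. 0 < x \<and> x < n - 1 \<longrightarrow> e q 0 \<noteq> e q x"
      proof (intro allI impI)
        fix x assume "0 < x \<and> x < n - 1"
        then have "0 < x" "x < n" by auto
        then have "e q x = n - 1" by (rule e1)
        then show "e q 0 \<noteq> e q x" using e0 False by simp
      qed
      then show ?thesis by simp
    qed
  qed
  have dW: "d s \<in> W6_bf n" if s: "s < n - 2" for s
  proof (rule W6I[OF n])
    have sn: "s < n" using s by simp
    show "d s \<in> transf n" unfolding transf_def
    proof (intro CollectI conjI allI impI)
      fix x assume "x < n" then show "d s x < n" using sn d0 d1[of x s] by (cases "x = s") auto
    next
      fix x assume "n \<le> x" then show "d s x = x" using d2 by blast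
    qed
    show "\<And>x. x < n \<Longrightarrow> d s x \<noteq> 0"
    proof -
      fix x assume "x < n" then show "d s x \<noteq> 0" using sn n d0 d1[of x s] by (cases "x = s") auto
    qed
    show "d s (n - 1) = n - 1" "d s (n - 2) = n - 1" using n s d1 by auto
    show "d s 0 \<in> {n - 2, n - 1} \<or> d s 0 \<in> QM n \<and> (\<forall>x\<in>QM n. d s x \<in> {n - 2, n - 1})"
      using sn n d0 d1[of 0 s] by (cases "s = 0") auto
    show "d s 0 = n - 1 \<or> (\<forall>x. 0 < x \<and> x < n - 1 \<longrightarrow> d s 0 \<noteq> d s x)"
    proof (cases "s = 0")
      case False then show ?thesis using d1[of 0 s] n by simp
    next
      case True
      have "\<forall>x. 0 < x \<and> x < n - 1 \<longrightarrow> d s 0 \<noteq> d s x"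
      proof (intro allI impI)
        fix x assume "0 < x \<and> x < n - 1"
        then have "x \<noteq> s" "x < n" using True by auto
        then have "d s x = n - 1" by (rule d1)
        then show "d s 0 \<noteq> d s x" using d0 sn True n by simp
      qed
      then show ?thesis by simp
    qed
  qed
  have reach: "\<exists>w\<in>lists Alph. run delta w 0 = q" if "q < n" for q
  proof (cases "q = 0")
    case True then show ?thesis by (intro bexI[of _ "[]"]) auto
  next
    case False
    have "e q \<in> W6_bf n" using False that by (intro eW) auto
    then obtain a where a: "a \<in> Alph" "delta a = e q" using allW by blast
    have "run delta [a] 0 = q" using a(2) e0[of q] by simp
    moreover have "[a] \<in> lists Alph" using a by simp
    ultimately show ?thesis by blast
  qed
  have wit: "\<exists>v. v \<in> lang n Alph delta s \<and> (\<forall>r<n. v \<in> lang n Alph delta r \<longrightarrow> r = s)"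
    if "s < n" "s \<noteq> n - 1" for s
  proof (cases "s = n - 2")
    case True
    have "[] \<in> lang n Alph delta s" using True by (simp add: lang_def)
    moreover have "\<forall>r<n. [] \<in> lang n Alph delta r \<longrightarrow> r = s" using True by (simp add: lang_def)
    ultimately show ?thesis by blast
  next
    case False
    then have sl: "s < n - 2" using that by auto
    have "d s \<in> W6_bf n" using sl by (rule dW)
    then obtain a where a: "a \<in> Alph" "delta a = d s" using allW by blast
    have "[a] \<in> lists Alph" using a by simp
    moreover have "run delta [a] s = n - 2" using a d0 that by simp
    moreover have "r = s" if "r < n" "run delta [a] r = n - 2" for r
    proof (rule ccontr)
      assume "r \<noteq> s"
      then have "run delta [a] r = n - 1" using a d1 that by simp
      then show False using that n by simp
    qed
    ultimately show ?thesis unfolding lang_def by blast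
  qed
  have distinct: "lang n Alph delta p \<noteq> lang n Alph delta q" if pq: "p < n" "q < n" "p \<noteq> q" for p q
  proof (cases "p = n - 1")
    case False
    obtain v where "v \<in> lang n Alph delta p" "\<forall>r<n. v \<in> lang n Alph delta r \<longrightarrow> r = p"
      using wit[OF pq(1) False] by blast
    then show ?thesis using pq by blast
  next
    case True
    then have qn: "q \<noteq> n - 1" using pq by simp
    obtain v where "v \<in> lang n Alph delta q" "\<forall>r<n. v \<in> lang n Alph delta r \<longrightarrow> r = q"
      using wit[OF pq(2) qn] by blast
    then show ?thesis using pq by blast
  qed
  have min: "minimal_dfa n Alph delta" using reach distinct by (auto simp: minimal_dfa_def)
  have le: "lang n Alph delta (n - 1) = {}"
  proof -
    have "run delta w (n-1) \<noteq> n - 2" if "w \<in> lists Alph" for w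
      using runNE(2)[OF that _ n1] n by (cases "w = []") auto
    then show ?thesis by (auto simp: lang_def)
  qed
  have lf: "lang n Alph delta (n - 2) = {[]}"
  proof -
    have "run delta w (n-2) \<noteq> n - 2" if "w \<in> lists Alph" "w \<noteq> []" for w
      using runNE(3)[OF that n1] n by auto
    then show ?thesis by (auto simp: lang_def)
  qed
  have bfree: "bifix_free (lang n Alph delta 0)"
    unfolding bifix_free_def
  proof (intro ballI impI conjI notI)
    fix u v assume u: "u \<in> lang n Alph delta 0" and v: "v \<in> lang n Alph delta 0" and ne: "u \<noteq> v"
    {
      assume "prefix u v"
      then obtain x where x: "v = u @ x" by (auto simp: prefix_def)
      have "x \<noteq> []" using x ne by auto
      moreover have "x \<in> lists Alph" using v x by (auto simp: lang_def)
      ultimately have "run delta x (n-2) = n - 1" using runNE(3)[OF _ _ n1] by blast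
      then show False using u v x n by (auto simp: lang_def)
    }
    {
      assume "suffix u v"
      then obtain x where x: "v = x @ u" by (auto simp: suffix_def)
      have xn: "x \<noteq> []" using x ne by auto
      have xl: "x \<in> lists Alph" and ul: "u \<in> lists Alph" using v x by (auto simp: lang_def)
      have u0: "run delta u 0 = n - 2" using u by (simp add: lang_def)
      have un: "u \<noteq> []" using u0 n by auto
      let ?s = "run delta x 0"
      have s0: "?s \<noteq> 0" using runNE(1)[OF xl xn] n by simp
      have sl: "?s < n" using run_less[OF dfa xl] n by simp
      have us: "run delta u ?s = n - 2" using v x by (simp add: lang_def)
      show False
      proof (cases "?s = n - 1")
        case True then show False using us runNE(2)[OF ul un n1] n by simp
      next
        case False
        have h: "run delta u 0 = n - 1 \<or> (\<forall>p. 0 < p \<and> p < n - 1 \<longrightarrow> run delta u 0 \<noteq> run delta u p)"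
          by (rule runNE(4)[OF ul un sl])
        have "run delta u 0 \<noteq> n - 1" using u0 n by simp
        then have h2: "\<forall>p. 0 < p \<and> p < n - 1 \<longrightarrow> run delta u 0 \<noteq> run delta u p" using h by blast
        have "0 < ?s \<and> ?s < n - 1" using s0 sl False by auto
        then have "run delta u 0 \<noteq> run delta u ?s" using h2 by blast
        then show False using u0 us n by simp
      qed
    }
  qed
  have bf: "bf_dfa n Alph delta" using dfa min bfree le lf by (simp add: bf_dfa_def)
  have nc: "no_colliding n (trans_sg n Alph delta)" using TS no_coll_W6[of "trans_sg n Alph delta" n] by simp
  show ?thesis using bf TS nc by blast
qed

theorem mainTheorem6:
  fixes n :: nat
  assumes "n \<ge> 3"
  shows "(\<exists>Alph delta. bf_dfa n Alph delta \<and> trans_sg n Alph delta = W6_bf n \<and>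
            no_colliding n (trans_sg n Alph delta)) \<and>
         (\<forall>Alph delta. bf_dfa n Alph delta \<and> no_colliding n (trans_sg n Alph delta)
            \<longrightarrow> trans_sg n Alph delta \<subseteq> W6_bf n)"
  using part1[OF assms] part2[OF _ assms] by blast

end
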